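(* Let $a_n=b_n$ under Case I (with (H-I) and (C-L($b_n$))) and $a_n=\lambda_n$ under Case II (with (H-II) and (C-L($\lambda_n$))). Then for every $\delta>0$, $$\lim_{n\to\infty}\frac1{a_n^2}\log P\Big(\frac{|M_n|}{n}>\delta\Big)=-\infty,\quad \lim_{n\to\infty}\frac1{a_n^2}\log P\Big(\frac{|N_n|}{n}>\delta\Big)=-\infty,\quad \lim_{n\to\infty}\frac1{a_n^2}\log P\Big(\frac{|U_n|}{n}>\delta\Big)=-\infty.$$
   Context: Model: for each $n\ge1$, $X_{k,n}=\theta_nX_{k-1,n}+\varepsilon_{k,n}$, $\varepsilon_{k,n}=\rho_n\varepsilon_{k-1,n}+V_k$ for $k=1,\dots,n$, with $X_{0,n}=\varepsilon_{0,n}=0$. Here $(V_k)_{k\ge1}$ are i.i.d. real random variables with $E V_1=0$, $EV_1^2=\sigma^2\in(0,\infty)$, and $E\exp(t_0V_1^2)<\infty$ for some $t_0>0$. $(\kappa_n)$ is a sequence of positive numbers with $\kappa_n\to\infty$, and $\gamma_1<0,\gamma_2<0$ are constants. Case I: $\theta_n=1+\gamma_1/\kappa_n$, $\rho_n=1+\gamma_2/\kappa_n$. Case II: $\theta_n=1+\gamma_1/\kappa_n$, $\rho_n=-1-\gamma_2/\kappa_n$. (H-I): $(b_n)$ is an increasing sequence of positive numbers with $b_n\to\infty$, $\frac{n}{b_n^6\kappa_n^2}\to\infty$, $\frac{n}{b_n^2\kappa_n^5}\to\infty$, $\frac{nb_n^2}{\kappa_n^5\log^2n}\to\infty$. (H-II):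 $(\lambda_n)$ is an increasing sequence of positive numbers with $\lambda_n\to\infty$, $\frac{n}{\lambda_n^6\kappa_n^6}\to\infty$, $\frac{n}{\lambda_n^2\kappa_n^{11}}\to\infty$, $\frac{n\lambda_n^2}{\kappa_n^7\log^2n}\to\infty$. (C-L($a_n$)): $\frac{1}{a_n^2}\log\big(nP(|V_1|^4>a_n\sqrt n)\big)\to-\infty$. Martingales: $M_n=\sum_{k=1}^nX_{k-1,n}V_k$, $N_n=\sum_{k=2}^nX_{k-2,n}V_k$, $U_n=\sum_{k=1}^n\varepsilon_{k-1,n}V_k$. *)

theory Defs
  imports "HOL-Probability.Probability"
begin

fun eps_proc :: "real \<Rightarrow> (nat \<Rightarrow> 'a \<Rightarrow> real) \<Rightarrow> nat \<Rightarrow> 'a \<Rightarrow> real" where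
  "eps_proc \<rho> V 0 \<omega> = 0"
| "eps_proc \<rho> V (Suc k) \<omega> = \<rho> * eps_proc \<rho> V k \<omega> + V (Suc k) \<omega>"

fun X_proc :: "real \<Rightarrow> real \<Rightarrow> (nat \<Rightarrow> 'a \<Rightarrow> real) \<Rightarrow> nat \<Rightarrow> 'a \<Rightarrow> real" where
  "X_proc \<theta> \<rho> V 0 \<omega> = 0"
| "X_proc \<theta> \<rho> V (Suc k) \<omega> = \<theta> * X_proc \<theta> \<rho> V k \<omega> + eps_proc \<rho> V (Suc k) \<omega>"

definition M_mart :: "real \<Rightarrow> real \<Rightarrow> (nat \<Rightarrow> 'a \<Rightarrow> real) \<Rightarrow> nat \<Rightarrow> 'a \<Rightarrow> real" where
  "M_mart \<theta> \<rho> V n \<omega> = (\<Sum>k=1..n. X_proc \<theta> \<rho> V (k - 1) \<omega> * V k \<omega>)"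

definition N_mart :: "real \<Rightarrow> real \<Rightarrow> (nat \<Rightarrow> 'a \<Rightarrow> real) \<Rightarrow> nat \<Rightarrow> 'a \<Rightarrow> real" where
  "N_mart \<theta> \<rho> V n \<omega> = (\<Sum>k=2..n. X_proc \<theta> \<rho> V (k - 2) \<omega> * V k \<omega>)"

definition U_mart :: "real \<Rightarrow> (nat \<Rightarrow> 'a \<Rightarrow> real) \<Rightarrow> nat \<Rightarrow> 'a \<Rightarrow> real" where
  "U_mart \<rho> V n \<omega> = (\<Sum>k=1..n. eps_proc \<rho> V (k - 1) \<omega> * V k \<omega>)"

definition ext_ln :: "real \<Rightarrow> ereal" where
  "ext_ln x = (if x \<le> 0 then -\<infinity> else ereal (ln x))"

end

theory Submission
  imports Defs
begin


lemma (in prob_space) prod_bound: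
  fixes V :: "nat \<Rightarrow> 'a \<Rightarrow> real" and f :: "nat \<Rightarrow> (nat \<Rightarrow> real) \<Rightarrow> real \<Rightarrow> ennreal"
  assumes indep: "indep_vars (\<lambda>_. borel) V {1..}"
    and fm: "\<And>k. (\<lambda>z. f k (fst z) (snd z)) \<in> borel_measurable (PiM {1..<k} (\<lambda>_. borel) \<Otimes>\<^sub>M borel)"
    and fb: "\<And>k x. k \<ge> 1 \<Longrightarrow> x \<in> space (PiM {1..<k} (\<lambda>_. borel)) \<Longrightarrow> (\<integral>\<^sup>+ \<omega>. f k x (V k \<omega>) \<partial>M) \<le> b k"
  shows "(\<integral>\<^sup>+ \<omega>. (\<Prod>k\<in>{1..m}. f k (restrict (\<lambda>i. V i \<omega>) {1..<k}) (V k \<omega>)) \<partial>M) \<le> (\<Prod>k\<in>{1..m}. b k)"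
proof (induction m)
  case 0
  then show ?case by (simp add: emeasure_space_1)
next
  case (Suc m)
  define S where "S = PiM {1..<Suc m} (\<lambda>_. borel :: real measure)"
  define P where "P = (\<lambda>\<omega>. restrict (\<lambda>i. V i \<omega>) {1..<Suc m})"
  define G where "G = (\<lambda>x. \<Prod>j\<in>{1..m}. f j (restrict x {1..<j}) (x j))"
  define T where "T = PiM {Suc m} (\<lambda>_. borel :: real measure)"
  define Q where "Q = (\<lambda>\<omega>. restrict (\<lambda>i. V i \<omega>) {Suc m})"
  have iv: "indep_var S P T Q"
    unfolding S_def P_def T_def Q_def by (rule indep_var_restrict[OF indep]) auto
  then have eq: "distr M S P \<Otimes>\<^sub>M distr M T Q = distr M (S \<Otimes>\<^sub>M T) (\<lambda>x. (P x, Q x))"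
    and rvP: "random_variable S P" and rvQ: "random_variable T Q"
    by (simp_all add: indep_var_distribution_eq)
  interpret D1: prob_space "distr M S P" by (rule prob_space_distr) (rule rvP)
  interpret D2: prob_space "distr M T Q" by (rule prob_space_distr) (rule rvQ)
  have Qv: "\<And>\<omega>. Q \<omega> (Suc m) = V (Suc m) \<omega>" by (simp add: Q_def)
  have pr: "(\<lambda>q. q (Suc m)) \<in> borel_measurable T"
    unfolding T_def by (rule measurable_component_singleton) simp
  have Gm: "G \<in> borel_measurable S"
    unfolding G_def S_def
  proof (intro borel_measurable_prod_ennreal)
    fix j assume j: "j \<in> {1..m}"
    have "(\<lambda>x. (restrict x {1..<j}, x j)) \<in> measurable (PiM {1..<Suc m} (\<lambda>_. borel :: real measure)) (PiM {1..<j} (\<lambda>_. borel) \<Otimes>\<^sub>M borel)"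
      using j by (intro measurable_Pair measurable_restrict_subset measurable_component_singleton) auto
    from measurable_comp[OF this fm[of j]]
    show "(\<lambda>x. f j (restrict x {1..<j}) (x j)) \<in> borel_measurable (PiM {1..<Suc m} (\<lambda>_. borel))"
      by (simp add: comp_def)
  qed
  have Fm: "(\<lambda>z. G (fst z) * f (Suc m) (fst z) (snd z (Suc m))) \<in> borel_measurable (S \<Otimes>\<^sub>M T)"
  proof (intro borel_measurable_times_ennreal measurable_compose[OF measurable_fst Gm])
    have "(\<lambda>z. (fst z, snd z (Suc m))) \<in> measurable (S \<Otimes>\<^sub>M T) (S \<Otimes>\<^sub>M borel)"
      by (intro measurable_Pair measurable_fst measurable_compose[OF measurable_snd pr])
    from measurable_comp[OF this fm[of "Suc m", folded S_def]]
    show "(\<lambda>z. f (Suc m) (fst z) (snd z (Suc m))) \<in> borel_measurable (S \<Otimes>\<^sub>M T)" by (simp add: comp_def)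
  qed
  have prodeq: "\<And>\<omega>. (\<Prod>k\<in>{1..Suc m}. f k (restrict (\<lambda>i. V i \<omega>) {1..<k}) (V k \<omega>))
      = G (P \<omega>) * f (Suc m) (P \<omega>) (V (Suc m) \<omega>)"
  proof -
    fix \<omega>
    have "G (P \<omega>) = (\<Prod>k\<in>{1..m}. f k (restrict (\<lambda>i. V i \<omega>) {1..<k}) (V k \<omega>))"
      unfolding G_def P_def
      by (intro prod.cong refl) (auto simp: restrict_def fun_eq_iff intro!: arg_cong2[where f="f _"])
    then show "?thesis \<omega>" by (simp add: P_def mult.commute)
  qed
  have "(\<integral>\<^sup>+ \<omega>. (\<Prod>k\<in>{1..Suc m}. f k (restrict (\<lambda>i. V i \<omega>) {1..<k}) (V k \<omega>)) \<partial>M)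
      = (\<integral>\<^sup>+ \<omega>. (\<lambda>z. G (fst z) * f (Suc m) (fst z) (snd z (Suc m))) (P \<omega>, Q \<omega>) \<partial>M)"
    by (intro nn_integral_cong) (simp only: prodeq Qv fst_conv snd_conv)
  also have "\<dots> = (\<integral>\<^sup>+ z. G (fst z) * f (Suc m) (fst z) (snd z (Suc m)) \<partial>distr M (S \<Otimes>\<^sub>M T) (\<lambda>x. (P x, Q x)))"
    by (rule nn_integral_distr[symmetric]) (auto intro: Fm measurable_Pair rvP rvQ)
  also have "\<dots> = (\<integral>\<^sup>+ z. G (fst z) * f (Suc m) (fst z) (snd z (Suc m)) \<partial>(distr M S P \<Otimes>\<^sub>M distr M T Q))"
    by (simp only: eq)
  also have "\<dots> = (\<integral>\<^sup>+ x. \<integral>\<^sup>+ q. G x * f (Suc m) x (q (Suc m)) \<partial>distr M T Q \<partial>distr M S P)"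
  proof -
    have Fm': "(\<lambda>z. G (fst z) * f (Suc m) (fst z) (snd z (Suc m))) \<in> borel_measurable (distr M S P \<Otimes>\<^sub>M distr M T Q)"
      using Fm by (simp only: measurable_cong_sets[OF sets_pair_measure_cong[OF sets_distr sets_distr] refl])
    show ?thesis using D2.nn_integral_fst[OF Fm'] by simp
  qed
  also have "\<dots> = (\<integral>\<^sup>+ x. G x * \<integral>\<^sup>+ q. f (Suc m) x (q (Suc m)) \<partial>distr M T Q \<partial>distr M S P)"
  proof (intro nn_integral_cong nn_integral_cmult)
    fix x assume "x \<in> space (distr M S P)"
    then have "x \<in> space S" by simp
    have "(\<lambda>v. f (Suc m) x v) \<in> borel_measurable borel"
      using measurable_Pair2[OF fm[of "Suc m"], of x] \<open>x \<in> space S\<close> unfolding S_def by simp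
    from measurable_comp[OF pr this]
    show "(\<lambda>q. f (Suc m) x (q (Suc m))) \<in> borel_measurable (distr M T Q)" by (simp add: comp_def)
  qed
  also have "\<dots> \<le> (\<integral>\<^sup>+ x. G x * b (Suc m) \<partial>distr M S P)"
  proof (intro nn_integral_mono mult_left_mono)
    fix x assume "x \<in> space (distr M S P)"
    then have x: "x \<in> space S" by simp
    have "(\<lambda>v. f (Suc m) x v) \<in> borel_measurable borel"
      using measurable_Pair2[OF fm[of "Suc m"], of x] x unfolding S_def by simp
    from measurable_comp[OF pr this]
    have "(\<lambda>q. f (Suc m) x (q (Suc m))) \<in> borel_measurable T" by (simp add: comp_def)
    then have "(\<integral>\<^sup>+ q. f (Suc m) x (q (Suc m)) \<partial>distr M T Q) = (\<integral>\<^sup>+ \<omega>. f (Suc m) x (Q \<omega> (Suc m)) \<partial>M)"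
      by (intro nn_integral_distr) (auto intro: rvQ)
    also have "\<dots> \<le> b (Suc m)" using fb[of "Suc m" x] x unfolding S_def by (simp add: Qv)
    finally show "(\<integral>\<^sup>+ q. f (Suc m) x (q (Suc m)) \<partial>distr M T Q) \<le> b (Suc m)" .
  qed simp
  also have "\<dots> = (\<integral>\<^sup>+ x. G x \<partial>distr M S P) * b (Suc m)"
    by (rule nn_integral_multc) (use Gm in simp)
  also have "(\<integral>\<^sup>+ x. G x \<partial>distr M S P) = (\<integral>\<^sup>+ \<omega>. G (P \<omega>) \<partial>M)"
    by (rule nn_integral_distr) (auto intro: Gm rvP)
  also have "(\<integral>\<^sup>+ \<omega>. G (P \<omega>) \<partial>M) = (\<integral>\<^sup>+ \<omega>. (\<Prod>k\<in>{1..m}. f k (restrict (\<lambda>i. V i \<omega>) {1..<k}) (V k \<omega>)) \<partial>M)"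
    unfolding G_def P_def
    by (intro nn_integral_cong prod.cong refl) (auto simp: restrict_def fun_eq_iff intro!: arg_cong2[where f="f _"])
  finally have "(\<integral>\<^sup>+ \<omega>. (\<Prod>k\<in>{1..Suc m}. f k (restrict (\<lambda>i. V i \<omega>) {1..<k}) (V k \<omega>)) \<partial>M) \<le> (\<integral>\<^sup>+ \<omega>. (\<Prod>k\<in>{1..m}. f k (restrict (\<lambda>i. V i \<omega>) {1..<k}) (V k \<omega>)) \<partial>M) * b (Suc m)" .
  also have "\<dots> \<le> (\<Prod>k\<in>{1..m}. b k) * b (Suc m)"
    by (rule mult_right_mono[OF Suc.IH]) simp
  also have "\<dots> = (\<Prod>k\<in>{1..Suc m}. b k)" by (simp add: prod.cl_ivl_Suc)
  finally show ?case .
qed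



lemma exp_taylor2: "exp (y::real) \<le> 1 + y + y\<^sup>2 * exp \<bar>y\<bar>"
proof -
  obtain t where t: "\<bar>t\<bar> \<le> \<bar>y\<bar>" "exp y = (\<Sum>m<2. (y ^ m) / fact m) + (exp t / fact 2) * y ^ 2"
    using Maclaurin_exp_le[of y 2] by blast
  have "exp t \<le> exp \<bar>y\<bar>" using t(1) by simp
  then have "exp t / 2 \<le> exp \<bar>y\<bar>" using exp_gt_zero[of t] by linarith
  then have "(exp t / 2) * y^2 \<le> exp \<bar>y\<bar> * y\<^sup>2"
    by (rule mult_right_mono) simp
  then have "(exp t / 2) * y^2 \<le> y\<^sup>2 * exp \<bar>y\<bar>" by (simp only: mult.commute)
  with t(2) show ?thesis by (simp add: eval_nat_numeral)
qed

lemma sv_bound: fixes s v t0 :: real assumes "t0 > 0" shows "s * v \<le> t0 * v\<^sup>2 + s\<^sup>2 / (4 * t0)"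
proof -
  have "0 \<le> (2 * t0 * v - s)\<^sup>2" by simp
  then have "4 * t0 * (s * v) \<le> 4 * t0 * (t0 * v\<^sup>2 + s\<^sup>2 / (4 * t0))"
    using assms by (simp add: power2_eq_square algebra_simps)
  then show ?thesis using assms by simp
qed

lemma v2_bound: fixes v t0 :: real assumes "t0 > 0" shows "v\<^sup>2 * exp \<bar>v\<bar> \<le> (2/t0) * exp (1/(2*t0)) * exp (t0 * v\<^sup>2)"
proof -
  have a: "v\<^sup>2 \<le> (2/t0) * exp (t0 * v\<^sup>2 / 2)"
  proof -
    have "t0 * v\<^sup>2 / 2 \<le> exp (t0 * v\<^sup>2 / 2)" by (meson exp_ge_add_one_self order_trans le_add_same_cancel2 zero_le_one)
    then show ?thesis using assms by (simp add: field_simps)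
  qed
  have b: "\<bar>v\<bar> \<le> t0 * v\<^sup>2 / 2 + 1 / (2 * t0)"
  proof -
    have "0 \<le> (t0 * \<bar>v\<bar> - 1)\<^sup>2" by simp
    then have "2 * t0 * \<bar>v\<bar> \<le> 2 * t0 * (t0 * v\<^sup>2 / 2 + 1 / (2 * t0))"
      using assms by (simp add: power2_eq_square algebra_simps)
    then show ?thesis using assms by simp
  qed
  have "v\<^sup>2 * exp \<bar>v\<bar> \<le> (2/t0) * exp (t0 * v\<^sup>2 / 2) * exp (t0 * v\<^sup>2 / 2 + 1 / (2 * t0))"
    using a b assms by (intro mult_mono) auto
  also have "\<dots> = (2/t0) * exp (1/(2*t0)) * exp (t0 * v\<^sup>2)"
    by (simp add: exp_add[symmetric] mult.assoc)
  finally show ?thesis .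
qed

lemma (in prob_space) subgauss:
  fixes X :: "'a \<Rightarrow> real" and t0 :: real
  assumes Xm: "X \<in> borel_measurable M" and Xi: "integrable M X" and m0: "expectation X = 0"
    and t0: "t0 > 0" and ie: "integrable M (\<lambda>\<omega>. exp (t0 * (X \<omega>)\<^sup>2))"
  shows "\<exists>C>0. \<forall>s. integrable M (\<lambda>\<omega>. exp (s * X \<omega>)) \<and> expectation (\<lambda>\<omega>. exp (s * X \<omega>)) \<le> exp (C * s\<^sup>2)"
proof -
  define K1 where "K1 = expectation (\<lambda>\<omega>. exp (t0 * (X \<omega>)\<^sup>2))"
  have "expectation (\<lambda>_. 1::real) \<le> K1"
    unfolding K1_def using t0 by (intro integral_mono ie) auto
  then have K1: "1 \<le> K1" by (simp add: prob_space)
  define A where "A = (2/t0) * exp (1/(2*t0))"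
  have A: "A > 0" using t0 by (simp add: A_def)
  define C where "C = max (A*K1) (1/(4*t0) + ln K1)"
  have "0 < A * K1" using A K1 by simp
  then have Cpos: "C > 0" unfolding C_def by (rule less_le_trans[OF _ max.cobounded1])
  show ?thesis
  proof (intro exI[of _ C] conjI allI Cpos)
    fix s :: real
    define g where "g = (\<lambda>\<omega>. exp (s\<^sup>2/(4*t0)) * exp (t0 * (X \<omega>)\<^sup>2))"
    have gi: "integrable M g" unfolding g_def by (intro integrable_mult_right ie)
    have le_g: "\<And>\<omega>. exp (s * X \<omega>) \<le> g \<omega>"
    proof -
      fix \<omega>
      have "s * X \<omega> \<le> s\<^sup>2/(4*t0) + t0 * (X \<omega>)\<^sup>2" using sv_bound[OF t0, of s "X \<omega>"] by linarith
      then have "exp (s * X \<omega>) \<le> exp (s\<^sup>2/(4*t0) + t0 * (X \<omega>)\<^sup>2)" by (simp only: exp_le_cancel_iff)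
      then show "exp (s * X \<omega>) \<le> g \<omega>" by (simp only: g_def exp_add)
    qed
    show ii: "integrable M (\<lambda>\<omega>. exp (s * X \<omega>))"
      by (rule Bochner_Integration.integrable_bound[OF gi]) (use le_g Xm in \<open>auto intro!: AE_I2 order_trans[OF _ abs_ge_self]\<close>)
    show "expectation (\<lambda>\<omega>. exp (s * X \<omega>)) \<le> exp (C * s\<^sup>2)"
    proof (cases "\<bar>s\<bar> \<le> 1")
      case True
      have pw: "exp (s * X \<omega>) \<le> 1 + s * X \<omega> + s\<^sup>2 * A * exp (t0 * (X \<omega>)\<^sup>2)" for \<omega>
      proof -
        have "(s * X \<omega>)\<^sup>2 * exp \<bar>s * X \<omega>\<bar> \<le> s\<^sup>2 * ((X \<omega>)\<^sup>2 * exp \<bar>X \<omega>\<bar>)"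
        proof -
          have "\<bar>s * X \<omega>\<bar> \<le> \<bar>X \<omega>\<bar>" using True by (simp add: abs_mult mult_left_le_one_le)
          then show ?thesis by (simp add: power_mult_distrib mult.assoc mult_left_mono)
        qed
        also have "\<dots> \<le> s\<^sup>2 * (A * exp (t0 * (X \<omega>)\<^sup>2))"
          using v2_bound[OF t0, of "X \<omega>"] by (intro mult_left_mono) (auto simp: A_def)
        finally show ?thesis using exp_taylor2[of "s * X \<omega>"] by (simp add: mult.assoc)
      qed
      have "expectation (\<lambda>\<omega>. exp (s * X \<omega>)) \<le> expectation (\<lambda>\<omega>. 1 + s * X \<omega> + s\<^sup>2 * A * exp (t0 * (X \<omega>)\<^sup>2))"
        by (intro integral_mono ii pw Bochner_Integration.integrable_add integrable_mult_right Xi ie) auto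
      also have "\<dots> = 1 + s\<^sup>2 * A * K1"
        using Xi ie m0 by (simp add: K1_def prob_space)
      also have "\<dots> \<le> exp (s\<^sup>2 * A * K1)" using exp_ge_add_one_self[of "s\<^sup>2 * A * K1"] by simp
      also have "\<dots> \<le> exp (C * s\<^sup>2)"
      proof -
        have "(A * K1) * s\<^sup>2 \<le> C * s\<^sup>2"
          unfolding C_def by (rule mult_right_mono) auto
        then show ?thesis by (simp add: mult.commute mult.left_commute)
      qed
      finally show ?thesis .
    next
      case False
      have "1 \<le> \<bar>s\<bar>" using False by simp
      then have "1*1 \<le> \<bar>s\<bar> * \<bar>s\<bar>" by (intro mult_mono) auto
      then have s1: "1 \<le> s\<^sup>2" by (simp add: power2_eq_square)
      have "expectation (\<lambda>\<omega>. exp (s * X \<omega>)) \<le> expectation g"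
        by (intro integral_mono ii gi le_g)
      also have "\<dots> = exp (s\<^sup>2/(4*t0)) * K1" unfolding g_def K1_def by (rule integral_mult_right_zero)
      also have "\<dots> = exp (s\<^sup>2/(4*t0) + ln K1)" using K1 by (simp only: exp_add exp_ln)
      also have "\<dots> \<le> exp (C * s\<^sup>2)"
      proof -
        have l: "0 \<le> ln K1" using K1 by (rule ln_ge_zero)
        have "1 * ln K1 \<le> s\<^sup>2 * ln K1"
          by (rule mult_right_mono[OF s1 l])
        then have "s\<^sup>2/(4*t0) + ln K1 \<le> s\<^sup>2/(4*t0) + s\<^sup>2 * ln K1"
          by linarith
        also have "\<dots> = (1/(4*t0) + ln K1) * s\<^sup>2" by (simp add: distrib_right)
        also have "\<dots> \<le> C * s\<^sup>2" unfolding C_def by (intro mult_right_mono max.cobounded2 zero_le_power2)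
        finally show ?thesis by (simp only: exp_le_cancel_iff)
      qed
      finally show ?thesis .
    qed
  qed
qed



lemma (in prob_space) mart_exp:
  fixes V :: "nat \<Rightarrow> 'a \<Rightarrow> real" and w :: "nat \<Rightarrow> nat \<Rightarrow> real" and C l :: real
  assumes indep: "indep_vars (\<lambda>_. borel) V {1..}"
    and ident: "\<And>k. k \<ge> 1 \<Longrightarrow> distr M borel (V k) = distr M borel (V 1)"
    and subg: "\<And>s. integrable M (\<lambda>\<omega>. exp (s * V 1 \<omega>)) \<and> expectation (\<lambda>\<omega>. exp (s * V 1 \<omega>)) \<le> exp (C * s\<^sup>2)"
  shows "(\<integral>\<^sup>+ \<omega>. ennreal (exp (l * (\<Sum>k\<in>{1..n}. (\<Sum>j\<in>{1..<k}. w k j * V j \<omega>) * V k \<omega>)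
            - C * l\<^sup>2 * (\<Sum>k\<in>{1..n}. (\<Sum>j\<in>{1..<k}. w k j * V j \<omega>)\<^sup>2))) \<partial>M) \<le> 1"
proof -
  have Vm: "\<And>k. k \<ge> 1 \<Longrightarrow> V k \<in> borel_measurable M"
    using indep unfolding indep_vars_def by auto
  define y where "y = (\<lambda>k (x::nat\<Rightarrow>real). \<Sum>j\<in>{1..<k}. w k j * x j)"
  define f where "f = (\<lambda>k x v. ennreal (exp (l * y k x * v - C * l\<^sup>2 * (y k x)\<^sup>2)))"
  have ym: "(\<lambda>z. y k (fst z)) \<in> borel_measurable (PiM {1..<k} (\<lambda>_. borel) \<Otimes>\<^sub>M (borel :: real measure))" for k
    unfolding y_def
  proof (intro borel_measurable_sum borel_measurable_times borel_measurable_const)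
    fix j assume j: "j \<in> {1..<k}"
    show "(\<lambda>z. fst z j) \<in> borel_measurable (PiM {1..<k} (\<lambda>_. borel) \<Otimes>\<^sub>M (borel :: real measure))"
      by (rule measurable_compose[OF measurable_fst], rule measurable_component_singleton) (use j in simp)
  qed
  have fm: "\<And>k. (\<lambda>z. f k (fst z) (snd z)) \<in> borel_measurable (PiM {1..<k} (\<lambda>_. borel) \<Otimes>\<^sub>M borel)"
    unfolding f_def using ym by measurable
  have fb: "(\<integral>\<^sup>+ \<omega>. f k x (V k \<omega>) \<partial>M) \<le> 1" if k: "k \<ge> 1" for k x
  proof -
    define c where "c = y k x"
    have "(\<integral>\<^sup>+ \<omega>. f k x (V k \<omega>) \<partial>M) = (\<integral>\<^sup>+ v. ennreal (exp (l * c * v - C * l\<^sup>2 * c\<^sup>2)) \<partial>distr M borel (V k))"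
      unfolding f_def c_def by (rule nn_integral_distr[symmetric]) (auto intro: Vm k)
    also have "\<dots> = (\<integral>\<^sup>+ v. ennreal (exp (l * c * v - C * l\<^sup>2 * c\<^sup>2)) \<partial>distr M borel (V 1))"
      using ident[OF k] by simp
    also have "\<dots> = (\<integral>\<^sup>+ \<omega>. ennreal (exp (l * c * V 1 \<omega> - C * l\<^sup>2 * c\<^sup>2)) \<partial>M)"
      by (rule nn_integral_distr) (auto intro: Vm)
    also have "\<dots> = (\<integral>\<^sup>+ \<omega>. ennreal (exp (- C * l\<^sup>2 * c\<^sup>2) * exp ((l * c) * V 1 \<omega>)) \<partial>M)"
      by (intro nn_integral_cong) (simp add: exp_add[symmetric] mult.assoc)
    also have "\<dots> = ennreal (expectation (\<lambda>\<omega>. exp (- C * l\<^sup>2 * c\<^sup>2) * exp ((l * c) * V 1 \<omega>)))"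
      by (rule nn_integral_eq_integral) (use subg in auto)
    also have "\<dots> \<le> ennreal 1"
    proof (intro ennreal_leI)
      have "expectation (\<lambda>\<omega>. exp (- C * l\<^sup>2 * c\<^sup>2) * exp ((l * c) * V 1 \<omega>))
          = exp (- C * l\<^sup>2 * c\<^sup>2) * expectation (\<lambda>\<omega>. exp ((l * c) * V 1 \<omega>))" by simp
      also have "\<dots> \<le> exp (- C * l\<^sup>2 * c\<^sup>2) * exp (C * (l * c)\<^sup>2)"
        using subg[of "l * c"] by (intro mult_left_mono) auto
      also have "\<dots> = 1" by (simp add: exp_add[symmetric] power_mult_distrib)
      finally show "expectation (\<lambda>\<omega>. exp (- C * l\<^sup>2 * c\<^sup>2) * exp ((l * c) * V 1 \<omega>)) \<le> 1" .
    qed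
    finally show ?thesis by simp
  qed
  have "(\<integral>\<^sup>+ \<omega>. (\<Prod>k\<in>{1..n}. f k (restrict (\<lambda>i. V i \<omega>) {1..<k}) (V k \<omega>)) \<partial>M) \<le> (\<Prod>k\<in>{1..n}. 1)"
    by (rule prod_bound[OF indep fm fb]) auto
  also have "(\<Prod>k\<in>{1..n}. 1::ennreal) = 1" by simp
  also have "(\<integral>\<^sup>+ \<omega>. (\<Prod>k\<in>{1..n}. f k (restrict (\<lambda>i. V i \<omega>) {1..<k}) (V k \<omega>)) \<partial>M)
     = (\<integral>\<^sup>+ \<omega>. ennreal (exp (l * (\<Sum>k\<in>{1..n}. (\<Sum>j\<in>{1..<k}. w k j * V j \<omega>) * V k \<omega>)
            - C * l\<^sup>2 * (\<Sum>k\<in>{1..n}. (\<Sum>j\<in>{1..<k}. w k j * V j \<omega>)\<^sup>2))) \<partial>M)"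
  proof (intro nn_integral_cong)
    fix \<omega>
    have yr: "y k (restrict (\<lambda>i. V i \<omega>) {1..<k}) = (\<Sum>j\<in>{1..<k}. w k j * V j \<omega>)" for k
      unfolding y_def by (intro sum.cong) auto
    have "(\<Prod>k\<in>{1..n}. f k (restrict (\<lambda>i. V i \<omega>) {1..<k}) (V k \<omega>))
        = (\<Prod>k\<in>{1..n}. ennreal (exp (l * (\<Sum>j\<in>{1..<k}. w k j * V j \<omega>) * V k \<omega> - C * l\<^sup>2 * (\<Sum>j\<in>{1..<k}. w k j * V j \<omega>)\<^sup>2)))"
      unfolding f_def yr ..
    also have "\<dots> = ennreal (\<Prod>k\<in>{1..n}. exp (l * (\<Sum>j\<in>{1..<k}. w k j * V j \<omega>) * V k \<omega> - C * l\<^sup>2 * (\<Sum>j\<in>{1..<k}. w k j * V j \<omega>)\<^sup>2))"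
      by (rule prod_ennreal) simp
    also have "(\<Prod>k\<in>{1..n}. exp (l * (\<Sum>j\<in>{1..<k}. w k j * V j \<omega>) * V k \<omega> - C * l\<^sup>2 * (\<Sum>j\<in>{1..<k}. w k j * V j \<omega>)\<^sup>2))
        = exp (\<Sum>k\<in>{1..n}. l * (\<Sum>j\<in>{1..<k}. w k j * V j \<omega>) * V k \<omega> - C * l\<^sup>2 * (\<Sum>j\<in>{1..<k}. w k j * V j \<omega>)\<^sup>2)"
      by (simp add: exp_sum)
    also have "(\<Sum>k\<in>{1..n}. l * (\<Sum>j\<in>{1..<k}. w k j * V j \<omega>) * V k \<omega> - C * l\<^sup>2 * (\<Sum>j\<in>{1..<k}. w k j * V j \<omega>)\<^sup>2)
        = l * (\<Sum>k\<in>{1..n}. (\<Sum>j\<in>{1..<k}. w k j * V j \<omega>) * V k \<omega>) - C * l\<^sup>2 * (\<Sum>k\<in>{1..n}. (\<Sum>j\<in>{1..<k}. w k j * V j \<omega>)\<^sup>2)"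
      by (simp only: sum_subtractf sum_distrib_left[symmetric] mult.assoc)
    finally show "(\<Prod>k\<in>{1..n}. f k (restrict (\<lambda>i. V i \<omega>) {1..<k}) (V k \<omega>)) = ennreal (exp (l * (\<Sum>k\<in>{1..n}. (\<Sum>j\<in>{1..<k}. w k j * V j \<omega>) * V k \<omega>)
            - C * l\<^sup>2 * (\<Sum>k\<in>{1..n}. (\<Sum>j\<in>{1..<k}. w k j * V j \<omega>)\<^sup>2)))" .
  qed
  finally show ?thesis .
qed



lemma (in prob_space) chernoff:
  fixes V :: "nat \<Rightarrow> 'a \<Rightarrow> real" and t0 :: real
  assumes indep: "indep_vars (\<lambda>_. borel) V {1..}"
    and ident: "\<And>k. k \<ge> 1 \<Longrightarrow> distr M borel (V k) = distr M borel (V 1)"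
    and ie: "integrable M (\<lambda>\<omega>. exp (t0 * (V 1 \<omega>)\<^sup>2))"
  shows "(\<integral>\<^sup>+ \<omega>. ennreal (exp (t0 * (\<Sum>j\<in>{1..n}. (V j \<omega>)\<^sup>2))) \<partial>M)
          \<le> ennreal (expectation (\<lambda>\<omega>. exp (t0 * (V 1 \<omega>)\<^sup>2))) ^ n"
proof -
  have Vm: "\<And>k. k \<ge> 1 \<Longrightarrow> V k \<in> borel_measurable M"
    using indep unfolding indep_vars_def by auto
  define K1 where "K1 = expectation (\<lambda>\<omega>. exp (t0 * (V 1 \<omega>)\<^sup>2))"
  define f where "f = (\<lambda>(k::nat) (x::nat\<Rightarrow>real) (v::real). ennreal (exp (t0 * v\<^sup>2)))"
  have fm: "\<And>k. (\<lambda>z. f k (fst z) (snd z)) \<in> borel_measurable (PiM {1..<k} (\<lambda>_. borel) \<Otimes>\<^sub>M borel)"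
    unfolding f_def by measurable
  have fb: "(\<integral>\<^sup>+ \<omega>. f k x (V k \<omega>) \<partial>M) \<le> ennreal K1" if k: "k \<ge> 1" for k x
  proof -
    have "(\<integral>\<^sup>+ \<omega>. f k x (V k \<omega>) \<partial>M) = (\<integral>\<^sup>+ v. ennreal (exp (t0 * v\<^sup>2)) \<partial>distr M borel (V k))"
      unfolding f_def by (rule nn_integral_distr[symmetric]) (auto intro: Vm k)
    also have "\<dots> = (\<integral>\<^sup>+ v. ennreal (exp (t0 * v\<^sup>2)) \<partial>distr M borel (V 1))"
      using ident[OF k] by simp
    also have "\<dots> = (\<integral>\<^sup>+ \<omega>. ennreal (exp (t0 * (V 1 \<omega>)\<^sup>2)) \<partial>M)"
      by (rule nn_integral_distr) (auto intro: Vm)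
    also have "\<dots> = ennreal K1"
      unfolding K1_def by (rule nn_integral_eq_integral) (use ie in auto)
    finally show ?thesis by simp
  qed
  have "(\<integral>\<^sup>+ \<omega>. (\<Prod>k\<in>{1..n}. f k (restrict (\<lambda>i. V i \<omega>) {1..<k}) (V k \<omega>)) \<partial>M) \<le> (\<Prod>k\<in>{1..n}. ennreal K1)"
    by (rule prod_bound[OF indep fm fb]) auto
  also have "(\<Prod>k\<in>{1..n}. ennreal K1) = ennreal K1 ^ n" by simp
  also have "(\<integral>\<^sup>+ \<omega>. (\<Prod>k\<in>{1..n}. f k (restrict (\<lambda>i. V i \<omega>) {1..<k}) (V k \<omega>)) \<partial>M)
     = (\<integral>\<^sup>+ \<omega>. ennreal (exp (t0 * (\<Sum>j\<in>{1..n}. (V j \<omega>)\<^sup>2))) \<partial>M)"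
  proof (intro nn_integral_cong)
    fix \<omega>
    have "(\<Prod>k\<in>{1..n}. f k (restrict (\<lambda>i. V i \<omega>) {1..<k}) (V k \<omega>)) = ennreal (\<Prod>k\<in>{1..n}. exp (t0 * (V k \<omega>)\<^sup>2))"
      unfolding f_def by (rule prod_ennreal) simp
    also have "(\<Prod>k\<in>{1..n}. exp (t0 * (V k \<omega>)\<^sup>2)) = exp (t0 * (\<Sum>j\<in>{1..n}. (V j \<omega>)\<^sup>2))"
      by (simp add: exp_sum sum_distrib_left)
    finally show "(\<Prod>k\<in>{1..n}. f k (restrict (\<lambda>i. V i \<omega>) {1..<k}) (V k \<omega>)) = ennreal (exp (t0 * (\<Sum>j\<in>{1..n}. (V j \<omega>)\<^sup>2)))" .
  qed
  finally show ?thesis unfolding K1_def .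
qed

lemma (in prob_space) markov_exp:
  fixes g :: "'a \<Rightarrow> real"
  assumes gm: "g \<in> borel_measurable M"
  shows "emeasure M {\<omega>\<in>space M. c \<le> g \<omega>} \<le> ennreal (exp (-c)) * (\<integral>\<^sup>+ \<omega>. ennreal (exp (g \<omega>)) \<partial>M)"
proof -
  define S where "S = {\<omega>\<in>space M. c \<le> g \<omega>}"
  have S: "S \<in> sets M" unfolding S_def using gm by measurable
  have "ennreal (exp c) * emeasure M S = (\<integral>\<^sup>+ \<omega>. ennreal (exp c) * indicator S \<omega> \<partial>M)"
    by (simp add: nn_integral_cmult_indicator S)
  also have "\<dots> \<le> (\<integral>\<^sup>+ \<omega>. ennreal (exp (g \<omega>)) \<partial>M)"
  proof (intro nn_integral_mono)
    fix \<omega> assume "\<omega> \<in> space M"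
    show "ennreal (exp c) * indicator S \<omega> \<le> ennreal (exp (g \<omega>))"
    proof (cases "\<omega> \<in> S")
      case True
      then have "c \<le> g \<omega>" by (simp add: S_def)
      then show ?thesis using True by (simp add: ennreal_leI)
    qed simp
  qed
  finally have *: "ennreal (exp c) * emeasure M S \<le> (\<integral>\<^sup>+ \<omega>. ennreal (exp (g \<omega>)) \<partial>M)" .
  have "ennreal (exp (-c)) * (ennreal (exp c) * emeasure M S) \<le> ennreal (exp (-c)) * (\<integral>\<^sup>+ \<omega>. ennreal (exp (g \<omega>)) \<partial>M)"
    by (rule mult_left_mono[OF *]) simp
  moreover have "ennreal (exp (-c)) * (ennreal (exp c) * emeasure M S) = emeasure M S"
    by (simp add: mult.assoc[symmetric] ennreal_mult[symmetric] exp_add[symmetric])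
  ultimately show ?thesis by (simp add: S_def)
qed

lemma (in prob_space) prob_le_of_emeasure:
  assumes "emeasure M A \<le> ennreal x" "0 \<le> x"
  shows "prob A \<le> x"
  using assms by (simp add: emeasure_eq_measure)



lemma (in prob_space) tail:
  fixes V Y :: "nat \<Rightarrow> 'a \<Rightarrow> real" and w :: "nat \<Rightarrow> nat \<Rightarrow> real" and C B K \<delta> :: real and n :: nat
  assumes indep: "indep_vars (\<lambda>_. borel) V {1..}"
    and ident: "\<And>k. k \<ge> 1 \<Longrightarrow> distr M borel (V k) = distr M borel (V 1)"
    and subg: "\<And>s. integrable M (\<lambda>\<omega>. exp (s * V 1 \<omega>)) \<and> expectation (\<lambda>\<omega>. exp (s * V 1 \<omega>)) \<le> exp (C * s\<^sup>2)"
    and Cpos: "C > 0"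
    and Ydef: "\<And>k \<omega>. Y k \<omega> = (\<Sum>j\<in>{1..<k}. w k j * V j \<omega>)"
    and Bnd: "\<And>\<omega>. (\<Sum>k\<in>{1..n}. (Y k \<omega>)\<^sup>2) \<le> B * (\<Sum>j\<in>{1..n}. (V j \<omega>)\<^sup>2)"
    and Bpos: "B > 0" and Kpos: "K > 0" and \<delta>pos: "\<delta> > 0" and npos: "n > 0"
  shows "prob {\<omega>\<in>space M. \<delta> < \<bar>\<Sum>k\<in>{1..n}. Y k \<omega> * V k \<omega>\<bar> / real n}
     \<le> 2 * exp (- (real n * \<delta>\<^sup>2 / (4*C*B*K))) + prob {\<omega>\<in>space M. K * real n < (\<Sum>j\<in>{1..n}. (V j \<omega>)\<^sup>2)}"
proof -
  have Vm: "\<And>k. k \<ge> 1 \<Longrightarrow> V k \<in> borel_measurable M"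
    using indep unfolding indep_vars_def by auto
  define T where "T = (\<lambda>\<omega>. \<Sum>k\<in>{1..n}. Y k \<omega> * V k \<omega>)"
  define Q where "Q = (\<lambda>\<omega>. \<Sum>k\<in>{1..n}. (Y k \<omega>)\<^sup>2)"
  define R where "R = (\<lambda>\<omega>. \<Sum>j\<in>{1..n}. (V j \<omega>)\<^sup>2)"
  have Ym: "\<And>k. Y k \<in> borel_measurable M"
    unfolding Ydef[abs_def] by (intro borel_measurable_sum borel_measurable_times borel_measurable_const) (auto intro: Vm)
  have Tm[measurable]: "T \<in> borel_measurable M"
    unfolding T_def by (intro borel_measurable_sum borel_measurable_times Ym) (auto intro: Vm)
  have Qm[measurable]: "Q \<in> borel_measurable M"
    unfolding Q_def by (intro borel_measurable_sum borel_measurable_power Ym)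
  have Rm[measurable]: "R \<in> borel_measurable M"
    unfolding R_def by (intro borel_measurable_sum borel_measurable_power) (auto intro: Vm)
  define D where "D = B * K * real n"
  have Dpos: "D > 0" using Bpos Kpos npos by (simp add: D_def)
  define l where "l = real n * \<delta> / (2 * C * D)"
  have lpos: "l > 0" using npos \<delta>pos Cpos Dpos by (simp add: l_def)
  define x where "x = real n * \<delta>\<^sup>2 / (4*C*B*K)"
  have xe: "l * (real n * \<delta>) - C * l\<^sup>2 * D = x"
    using npos Cpos Bpos Kpos unfolding x_def l_def D_def by (simp add: field_simps power2_eq_square)
  have mart: "(\<integral>\<^sup>+ \<omega>. ennreal (exp (l' * T \<omega> - C * l'\<^sup>2 * Q \<omega>)) \<partial>M) \<le> 1" for l'
    using mart_exp[OF indep ident subg, where l=l' and n=n and w=w] unfolding T_def Q_def Ydef .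
  define E1 where "E1 = {\<omega>\<in>space M. l * (real n * \<delta>) - C * l\<^sup>2 * D \<le> l * T \<omega> - C * l\<^sup>2 * Q \<omega>}"
  define E2 where "E2 = {\<omega>\<in>space M. l * (real n * \<delta>) - C * l\<^sup>2 * D \<le> (-l) * T \<omega> - C * (-l)\<^sup>2 * Q \<omega>}"
  define E3 where "E3 = {\<omega>\<in>space M. K * real n < R \<omega>}"
  have [measurable]: "E1 \<in> sets M" "E2 \<in> sets M" "E3 \<in> sets M"
    unfolding E1_def E2_def E3_def by measurable
  have p1: "prob E1 \<le> exp (- x)"
  proof (rule prob_le_of_emeasure)
    have "emeasure M E1 \<le> ennreal (exp (- x)) * (\<integral>\<^sup>+ \<omega>. ennreal (exp (l * T \<omega> - C * l\<^sup>2 * Q \<omega>)) \<partial>M)"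
      unfolding E1_def xe[symmetric] by (rule markov_exp) measurable
    also have "\<dots> \<le> ennreal (exp (- x)) * 1" by (rule mult_left_mono[OF mart]) simp
    finally show "emeasure M E1 \<le> ennreal (exp (- x))" by simp
  qed simp
  have p2: "prob E2 \<le> exp (- x)"
  proof (rule prob_le_of_emeasure)
    have "emeasure M E2 \<le> ennreal (exp (- x)) * (\<integral>\<^sup>+ \<omega>. ennreal (exp ((-l) * T \<omega> - C * (-l)\<^sup>2 * Q \<omega>)) \<partial>M)"
      unfolding E2_def xe[symmetric] by (rule markov_exp) measurable
    also have "\<dots> \<le> ennreal (exp (- x)) * 1" by (rule mult_left_mono[OF mart]) simp
    finally show "emeasure M E2 \<le> ennreal (exp (- x))" by simp
  qed simp
  have sub: "{\<omega>\<in>space M. \<delta> < \<bar>T \<omega>\<bar> / real n} \<subseteq> E1 \<union> E2 \<union> E3"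
  proof
    fix \<omega> assume w: "\<omega> \<in> {\<omega>\<in>space M. \<delta> < \<bar>T \<omega>\<bar> / real n}"
    then have sp: "\<omega> \<in> space M" and "\<delta> * real n < \<bar>T \<omega>\<bar>" using npos by (auto simp: field_simps)
    then have Tb: "real n * \<delta> \<le> T \<omega> \<or> real n * \<delta> \<le> - T \<omega>" by (auto simp: mult.commute)
    show "\<omega> \<in> E1 \<union> E2 \<union> E3"
    proof (cases "K * real n < R \<omega>")
      case True then show ?thesis using sp by (simp add: E3_def)
    next
      case False
      then have "R \<omega> \<le> K * real n" by simp
      then have "B * R \<omega> \<le> B * (K * real n)" using Bpos by (simp add: mult_left_mono)
      then have "Q \<omega> \<le> D"
        using Bnd[of \<omega>] unfolding Q_def R_def D_def by (simp add: mult.assoc)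
      then have q: "C * l\<^sup>2 * Q \<omega> \<le> C * l\<^sup>2 * D" using Cpos by (simp add: mult_left_mono)
      from Tb show ?thesis
      proof
        assume "real n * \<delta> \<le> T \<omega>"
        then have "l * (real n * \<delta>) \<le> l * T \<omega>" using lpos by (simp add: mult_left_mono)
        then show ?thesis using q sp by (simp add: E1_def)
      next
        assume "real n * \<delta> \<le> - T \<omega>"
        then have "l * (real n * \<delta>) \<le> l * (- T \<omega>)" using lpos by (intro mult_left_mono) auto
        then show ?thesis using q sp by (simp add: E2_def)
      qed
    qed
  qed
  have "prob {\<omega>\<in>space M. \<delta> < \<bar>T \<omega>\<bar> / real n} \<le> prob (E1 \<union> E2 \<union> E3)"
    by (rule finite_measure_mono[OF sub]) simp
  also have "\<dots> \<le> prob (E1 \<union> E2) + prob E3" by (rule measure_subadditive) auto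
  also have "prob (E1 \<union> E2) \<le> prob E1 + prob E2" by (rule measure_subadditive) auto
  finally have "prob {\<omega>\<in>space M. \<delta> < \<bar>T \<omega>\<bar> / real n} \<le> 2 * exp (- x) + prob E3"
    using p1 p2 by simp
  then show ?thesis unfolding T_def E3_def R_def x_def .
qed



lemma wcs:
  fixes a b :: "nat \<Rightarrow> real"
  shows "(\<Sum>j\<in>A. a j * b j)\<^sup>2 \<le> (\<Sum>j\<in>A. \<bar>a j\<bar>) * (\<Sum>j\<in>A. \<bar>a j\<bar> * (b j)\<^sup>2)"
proof -
  have "(\<Sum>j\<in>A. a j * b j) = (\<Sum>j\<in>A. sqrt \<bar>a j\<bar> * (sgn (a j) * sqrt \<bar>a j\<bar> * b j))"
  proof (intro sum.cong refl)
    fix j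
    have "sqrt \<bar>a j\<bar> * sqrt \<bar>a j\<bar> = \<bar>a j\<bar>" by simp
    then show "a j * b j = sqrt \<bar>a j\<bar> * (sgn (a j) * sqrt \<bar>a j\<bar> * b j)"
      by (metis (no_types, lifting) mult.assoc mult.left_commute sgn_mult_abs)
  qed
  also have "(\<dots>)\<^sup>2 \<le> (\<Sum>j\<in>A. (sqrt \<bar>a j\<bar>)\<^sup>2) * (\<Sum>j\<in>A. (sgn (a j) * sqrt \<bar>a j\<bar> * b j)\<^sup>2)"
    by (rule Cauchy_Schwarz_ineq_sum)
  also have "(\<Sum>j\<in>A. (sqrt \<bar>a j\<bar>)\<^sup>2) = (\<Sum>j\<in>A. \<bar>a j\<bar>)" by simp
  also have "(\<Sum>j\<in>A. (sgn (a j) * sqrt \<bar>a j\<bar> * b j)\<^sup>2) = (\<Sum>j\<in>A. \<bar>a j\<bar> * (b j)\<^sup>2)"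
  proof (intro sum.cong refl)
    fix j
    have "(sgn (a j))\<^sup>2 * \<bar>a j\<bar> = \<bar>a j\<bar>" by (cases "a j = 0") (auto simp: sgn_if)
    then show "(sgn (a j) * sqrt \<bar>a j\<bar> * b j)\<^sup>2 = \<bar>a j\<bar> * (b j)\<^sup>2"
      by (simp add: power_mult_distrib)
  qed
  finally show ?thesis .
qed

lemma rev_sum1: fixes k :: nat shows "(\<Sum>j\<in>{1..k}. f (k - j)) = (\<Sum>m\<in>{..<k}. (f m :: real))"
  by (rule sum.reindex_bij_witness[where i="\<lambda>m. k - m" and j="\<lambda>j. k - j"]) auto

lemma rev_sum2: fixes j n :: nat shows "(\<Sum>k\<in>{j..<n}. f (k - j)) = (\<Sum>m\<in>{..<n-j}. (f m :: real))"
  by (rule sum.reindex_bij_witness[where i="\<lambda>m. m + j" and j="\<lambda>k. k - j"]) auto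

lemma quad_bound:
  fixes d v :: "nat \<Rightarrow> real" and S :: real
  assumes dS: "(\<Sum>m<n. \<bar>d m\<bar>) \<le> S"
  shows "(\<Sum>k<n. (\<Sum>j\<in>{1..k}. d (k - j) * v j)\<^sup>2) \<le> S\<^sup>2 * (\<Sum>j\<in>{1..n}. (v j)\<^sup>2)"
proof -
  have S0: "0 \<le> S" using dS order_trans[OF sum_nonneg] by (metis abs_ge_zero)
  have rowb: "(\<Sum>j\<in>{1..k}. \<bar>d (k - j)\<bar>) \<le> S" if "k < n" for k
  proof -
    have "(\<Sum>j\<in>{1..k}. \<bar>d (k - j)\<bar>) = (\<Sum>m<k. \<bar>d m\<bar>)" by (rule rev_sum1)
    also have "\<dots> \<le> (\<Sum>m<n. \<bar>d m\<bar>)" using that by (intro sum_mono2) auto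
    finally show ?thesis using dS by linarith
  qed
  have "(\<Sum>k<n. (\<Sum>j\<in>{1..k}. d (k - j) * v j)\<^sup>2) \<le> (\<Sum>k<n. S * (\<Sum>j\<in>{1..k}. \<bar>d (k - j)\<bar> * (v j)\<^sup>2))"
  proof (intro sum_mono)
    fix k assume "k \<in> {..<n}"
    then have k: "k < n" by simp
    have "(\<Sum>j\<in>{1..k}. d (k - j) * v j)\<^sup>2 \<le> (\<Sum>j\<in>{1..k}. \<bar>d (k - j)\<bar>) * (\<Sum>j\<in>{1..k}. \<bar>d (k - j)\<bar> * (v j)\<^sup>2)"
      by (rule wcs)
    also have "\<dots> \<le> S * (\<Sum>j\<in>{1..k}. \<bar>d (k - j)\<bar> * (v j)\<^sup>2)"
      by (intro mult_right_mono rowb k sum_nonneg) auto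
    finally show "(\<Sum>j\<in>{1..k}. d (k - j) * v j)\<^sup>2 \<le> S * (\<Sum>j\<in>{1..k}. \<bar>d (k - j)\<bar> * (v j)\<^sup>2)" .
  qed
  also have "\<dots> = S * (\<Sum>k<n. \<Sum>j\<in>{1..k}. \<bar>d (k - j)\<bar> * (v j)\<^sup>2)" by (simp add: sum_distrib_left)
  also have "(\<Sum>k<n. \<Sum>j\<in>{1..k}. \<bar>d (k - j)\<bar> * (v j)\<^sup>2) = (\<Sum>k\<in>{..<n}. \<Sum>j\<in>{j. j \<in> {1..n} \<and> j \<le> k}. \<bar>d (k - j)\<bar> * (v j)\<^sup>2)"
    by (intro sum.cong refl) auto
  also have "\<dots> = (\<Sum>j\<in>{1..n}. \<Sum>k\<in>{k. k \<in> {..<n} \<and> j \<le> k}. \<bar>d (k - j)\<bar> * (v j)\<^sup>2)"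
    by (rule sum.swap_restrict) auto
  also have "\<dots> = (\<Sum>j\<in>{1..n}. (v j)\<^sup>2 * (\<Sum>k\<in>{j..<n}. \<bar>d (k - j)\<bar>))"
  proof (intro sum.cong refl)
    fix j
    have "{k. k \<in> {..<n} \<and> j \<le> k} = {j..<n}" by auto
    then show "(\<Sum>k\<in>{k. k \<in> {..<n} \<and> j \<le> k}. \<bar>d (k - j)\<bar> * (v j)\<^sup>2) = (v j)\<^sup>2 * (\<Sum>k\<in>{j..<n}. \<bar>d (k - j)\<bar>)"
      by (simp add: sum_distrib_left mult.commute)
  qed
  also have "\<dots> \<le> (\<Sum>j\<in>{1..n}. (v j)\<^sup>2 * S)"
  proof (intro sum_mono mult_left_mono)
    fix j
    have "(\<Sum>k\<in>{j..<n}. \<bar>d (k - j)\<bar>) = (\<Sum>m<n-j. \<bar>d m\<bar>)" by (rule rev_sum2)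
    also have "\<dots> \<le> (\<Sum>m<n. \<bar>d m\<bar>)" by (intro sum_mono2) auto
    finally show "(\<Sum>k\<in>{j..<n}. \<bar>d (k - j)\<bar>) \<le> S" using dS by linarith
  qed simp
  finally have "(\<Sum>k<n. (\<Sum>j\<in>{1..k}. d (k - j) * v j)\<^sup>2) \<le> S * (\<Sum>j\<in>{1..n}. (v j)\<^sup>2 * S)"
    using S0 by (simp add: mult_left_mono)
  also have "\<dots> = S\<^sup>2 * (\<Sum>j\<in>{1..n}. (v j)\<^sup>2)"
    by (simp add: sum_distrib_left sum_distrib_right power2_eq_square mult.commute mult.left_commute)
  finally show ?thesis .
qed



definition cc :: "real \<Rightarrow> real \<Rightarrow> nat \<Rightarrow> real" where
  "cc \<theta> \<rho> m = (\<Sum>i\<in>{..m}. \<theta>^i * \<rho>^(m - i))"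

lemma cc_0[simp]: "cc \<theta> \<rho> 0 = 1" by (simp add: cc_def)

lemma cc_Suc: "cc \<theta> \<rho> (Suc m) = \<theta> * cc \<theta> \<rho> m + \<rho>^(Suc m)"
  unfolding cc_def sum.atMost_Suc_shift
  by (simp add: sum_distrib_left mult.assoc)

lemma eps_rep: "eps_proc \<rho> V k \<omega> = (\<Sum>j\<in>{1..k}. \<rho>^(k - j) * V j \<omega>)"
proof (induction k)
  case 0 then show ?case by simp
next
  case (Suc k)
  have "(\<Sum>j\<in>{1..Suc k}. \<rho>^(Suc k - j) * V j \<omega>) = (\<Sum>j\<in>{1..k}. \<rho>^(Suc k - j) * V j \<omega>) + V (Suc k) \<omega>"
    by (simp add: sum.cl_ivl_Suc)
  also have "(\<Sum>j\<in>{1..k}. \<rho>^(Suc k - j) * V j \<omega>) = \<rho> * (\<Sum>j\<in>{1..k}. \<rho>^(k - j) * V j \<omega>)"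
    unfolding sum_distrib_left by (intro sum.cong refl) (simp add: Suc_diff_le mult.assoc)
  finally show ?case using Suc by simp
qed

lemma X_rep: "X_proc \<theta> \<rho> V k \<omega> = (\<Sum>j\<in>{1..k}. cc \<theta> \<rho> (k - j) * V j \<omega>)"
proof (induction k)
  case 0 then show ?case by simp
next
  case (Suc k)
  have "(\<Sum>j\<in>{1..Suc k}. cc \<theta> \<rho> (Suc k - j) * V j \<omega>) = (\<Sum>j\<in>{1..k}. cc \<theta> \<rho> (Suc k - j) * V j \<omega>) + V (Suc k) \<omega>"
    by (simp add: sum.cl_ivl_Suc)
  also have "(\<Sum>j\<in>{1..k}. cc \<theta> \<rho> (Suc k - j) * V j \<omega>)
      = \<theta> * (\<Sum>j\<in>{1..k}. cc \<theta> \<rho> (k - j) * V j \<omega>) + (\<Sum>j\<in>{1..k}. \<rho>^(Suc k - j) * V j \<omega>)"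
    unfolding sum_distrib_left sum.distrib[symmetric]
    by (intro sum.cong refl) (simp add: Suc_diff_le cc_Suc algebra_simps)
  finally have "(\<Sum>j\<in>{1..Suc k}. cc \<theta> \<rho> (Suc k - j) * V j \<omega>)
      = \<theta> * (\<Sum>j\<in>{1..k}. cc \<theta> \<rho> (k - j) * V j \<omega>) + ((\<Sum>j\<in>{1..k}. \<rho>^(Suc k - j) * V j \<omega>) + V (Suc k) \<omega>)"
    by simp
  also have "(\<Sum>j\<in>{1..k}. \<rho>^(Suc k - j) * V j \<omega>) + V (Suc k) \<omega> = eps_proc \<rho> V (Suc k) \<omega>"
    unfolding eps_rep by (simp add: sum.cl_ivl_Suc)
  finally show ?case using Suc by simp
qed

lemma cc_abs: assumes "\<bar>\<theta>\<bar> \<le> q" "\<bar>\<rho>\<bar> \<le> q" shows "\<bar>cc \<theta> \<rho> m\<bar> \<le> (real m + 1) * q^m"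
proof -
  have "\<bar>cc \<theta> \<rho> m\<bar> \<le> (\<Sum>i\<in>{..m}. \<bar>\<theta>^i * \<rho>^(m - i)\<bar>)" unfolding cc_def by (rule sum_abs)
  also have "\<dots> \<le> (\<Sum>i\<in>{..m}. q^m)"
  proof (intro sum_mono)
    fix i assume "i \<in> {..m}"
    then have "q^m = q^i * q^(m-i)" by (simp add: power_add[symmetric])
    moreover have "\<bar>\<theta>^i * \<rho>^(m - i)\<bar> \<le> q^i * q^(m-i)"
      unfolding abs_mult power_abs using assms
      by (intro mult_mono power_mono) auto
    ultimately show "\<bar>\<theta>^i * \<rho>^(m - i)\<bar> \<le> q^m" by simp
  qed
  also have "\<dots> = (real m + 1) * q^m" by simp
  finally show ?thesis .
qed

lemma geo2_id: fixes q :: real shows "(\<Sum>m<n. (real m + 1) * q^m) * (1 - q)\<^sup>2 = 1 - (real n + 1) * q^n + real n * q^(Suc n)"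
proof (induction n)
  case 0 then show ?case by simp
next
  case (Suc n)
  have "(\<Sum>m<Suc n. (real m + 1) * q^m) * (1 - q)\<^sup>2 = (\<Sum>m<n. (real m + 1) * q^m) * (1 - q)\<^sup>2 + (real n + 1) * q^n * (1 - q)\<^sup>2"
    by (simp add: distrib_right)
  also have "\<dots> = 1 - (real (Suc n) + 1) * q^(Suc n) + real (Suc n) * q^(Suc (Suc n))"
    unfolding Suc.IH by (simp add: power2_eq_square algebra_simps)
  finally show ?case .
qed

lemma geo2_bound: fixes q :: real assumes "0 \<le> q" "q < 1" shows "(\<Sum>m<n. (real m + 1) * q^m) \<le> 1 / (1 - q)\<^sup>2"
proof -
  have "(real n + 1) * q^n - real n * q^(Suc n) = q^n * (1 + real n * (1 - q))"
    by (simp add: algebra_simps)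
  also have "\<dots> \<ge> 0" using assms by simp
  finally have "(\<Sum>m<n. (real m + 1) * q^m) * (1 - q)\<^sup>2 \<le> 1" unfolding geo2_id by linarith
  then show ?thesis using assms by (simp add: field_simps)
qed

lemma cc_sum: fixes q :: real assumes "0 \<le> q" "q < 1" "\<bar>\<theta>\<bar> \<le> q" "\<bar>\<rho>\<bar> \<le> q"
  shows "(\<Sum>m<n. \<bar>cc \<theta> \<rho> m\<bar>) \<le> 1 / (1 - q)\<^sup>2"
  using order_trans[OF sum_mono[OF cc_abs[OF assms(3,4)]] geo2_bound[OF assms(1,2)]] by simp

lemma rho_sum: fixes q :: real assumes "0 \<le> q" "q < 1" "\<bar>\<rho>\<bar> \<le> q"
  shows "(\<Sum>m<n. \<bar>\<rho>^m\<bar>) \<le> 1 / (1 - q)\<^sup>2"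
proof -
  have "(\<Sum>m<n. \<bar>\<rho>^m\<bar>) \<le> (\<Sum>m<n. (real m + 1) * q^m)"
  proof (intro sum_mono)
    fix m
    have "\<bar>\<rho>^m\<bar> \<le> q^m" unfolding power_abs using assms by (intro power_mono) auto
    also have "\<dots> \<le> (real m + 1) * q^m" using mult_right_mono[of 1 "real m + 1" "q^m"] assms by simp
    finally show "\<bar>\<rho>^m\<bar> \<le> (real m + 1) * q^m" .
  qed
  also have "\<dots> \<le> 1 / (1 - q)\<^sup>2" by (rule geo2_bound[OF assms(1,2)])
  finally show ?thesis .
qed

lemma shift1: fixes n :: nat shows "(\<Sum>k\<in>{1..n}. (g (k - 1) :: real)) = (\<Sum>k<n. g k)"
  by (rule sum.reindex_bij_witness[where i="\<lambda>k. k + 1" and j="\<lambda>k. k - 1"]) auto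

lemma shift2: fixes n :: nat assumes "g 0 = 0" shows "(\<Sum>k\<in>{1..n}. (g (k - 2) :: real)) = (\<Sum>k<n - 1. g k)"
proof (induction n)
  case 0 then show ?case by simp
next
  case (Suc n)
  then show ?case
  proof (cases n)
    case 0 then show ?thesis using assms by simp
  next
    case (Suc n')
    with Suc.IH show ?thesis by (simp add: sum.cl_ivl_Suc)
  qed
qed

lemma M_sq:
  assumes "0 \<le> q" "q < 1" "\<bar>\<theta>\<bar> \<le> q" "\<bar>\<rho>\<bar> \<le> q"
  shows "(\<Sum>k\<in>{1..n}. (X_proc \<theta> \<rho> V (k - 1) \<omega>)\<^sup>2) \<le> (1 / (1 - q)\<^sup>2)\<^sup>2 * (\<Sum>j\<in>{1..n}. (V j \<omega>)\<^sup>2)"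
  unfolding shift1[of "\<lambda>k. (X_proc \<theta> \<rho> V k \<omega>)\<^sup>2"] unfolding X_rep
  by (rule quad_bound[OF cc_sum[OF assms]])

lemma N_sq:
  assumes "0 \<le> q" "q < 1" "\<bar>\<theta>\<bar> \<le> q" "\<bar>\<rho>\<bar> \<le> q"
  shows "(\<Sum>k\<in>{1..n}. (X_proc \<theta> \<rho> V (k - 2) \<omega>)\<^sup>2) \<le> (1 / (1 - q)\<^sup>2)\<^sup>2 * (\<Sum>j\<in>{1..n}. (V j \<omega>)\<^sup>2)"
proof -
  have "(\<Sum>k\<in>{1..n}. (X_proc \<theta> \<rho> V (k - 2) \<omega>)\<^sup>2) = (\<Sum>k<n - 1. (X_proc \<theta> \<rho> V k \<omega>)\<^sup>2)"
    by (rule shift2[of "\<lambda>k. (X_proc \<theta> \<rho> V k \<omega>)\<^sup>2"]) simp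
  also have "\<dots> \<le> (\<Sum>k<n. (X_proc \<theta> \<rho> V k \<omega>)\<^sup>2)" by (intro sum_mono2) auto
  also have "\<dots> \<le> (1 / (1 - q)\<^sup>2)\<^sup>2 * (\<Sum>j\<in>{1..n}. (V j \<omega>)\<^sup>2)"
    unfolding X_rep by (rule quad_bound[OF cc_sum[OF assms]])
  finally show ?thesis .
qed

lemma U_sq:
  assumes "0 \<le> q" "q < 1" "\<bar>\<rho>\<bar> \<le> q"
  shows "(\<Sum>k\<in>{1..n}. (eps_proc \<rho> V (k - 1) \<omega>)\<^sup>2) \<le> (1 / (1 - q)\<^sup>2)\<^sup>2 * (\<Sum>j\<in>{1..n}. (V j \<omega>)\<^sup>2)"
  unfolding shift1[of "\<lambda>k. (eps_proc \<rho> V k \<omega>)\<^sup>2"] unfolding eps_rep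
  by (rule quad_bound[where d="\<lambda>m. \<rho>^m", OF rho_sum[OF assms]])

lemma X1_w: "X_proc \<theta> \<rho> V (k - 1) \<omega> = (\<Sum>j\<in>{1..<k}. cc \<theta> \<rho> (k - 1 - j) * V j \<omega>)"
proof -
  have "{1..k-1} = {1..<k}" by auto
  then show ?thesis unfolding X_rep by simp
qed

lemma eps1_w: "eps_proc \<rho> V (k - 1) \<omega> = (\<Sum>j\<in>{1..<k}. \<rho>^(k - 1 - j) * V j \<omega>)"
proof -
  have "{1..k-1} = {1..<k}" by auto
  then show ?thesis unfolding eps_rep by simp
qed

lemma X2_w: "X_proc \<theta> \<rho> V (k - 2) \<omega> = (\<Sum>j\<in>{1..<k}. (if j \<le> k - 2 then cc \<theta> \<rho> (k - 2 - j) else 0) * V j \<omega>)"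
proof -
  have "(\<Sum>j\<in>{1..<k}. (if j \<le> k - 2 then cc \<theta> \<rho> (k - 2 - j) else 0) * V j \<omega>)
      = (\<Sum>j\<in>{1..<k}. (if j \<le> k - 2 then cc \<theta> \<rho> (k - 2 - j) * V j \<omega> else 0))"
    by (intro sum.cong refl) simp
  also have "\<dots> = (\<Sum>j\<in>{j\<in>{1..<k}. j \<le> k - 2}. cc \<theta> \<rho> (k - 2 - j) * V j \<omega>)"
    by (rule sum.inter_filter[symmetric]) simp
  also have "{j\<in>{1..<k}. j \<le> k - 2} = {1..k-2}" by auto
  finally show ?thesis unfolding X_rep by simp
qed

lemma N_alt: "N_mart \<theta> \<rho> V n \<omega> = (\<Sum>k\<in>{1..n}. X_proc \<theta> \<rho> V (k - 2) \<omega> * V k \<omega>)"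
proof (cases n)
  case 0 then show ?thesis by (simp add: N_mart_def)
next
  case (Suc m)
  have "{1..n} = insert 1 {2..n}" using Suc by auto
  then show ?thesis by (simp add: N_mart_def)
qed



lemma limit_from_bound:
  fixes p a \<kappa> :: "nat \<Rightarrow> real" and c :: real
  assumes apos: "\<And>n. a n > 0" and alim: "filterlim a at_top sequentially"
    and lim: "filterlim (\<lambda>n. real n / ((\<kappa> n)^4 * (a n)^2)) at_top sequentially"
    and cpos: "c > 0"
    and ev: "eventually (\<lambda>n. p n \<le> 3 * exp (- (c * (real n / (\<kappa> n)^4)))) sequentially"
  shows "((\<lambda>n. ext_ln (p n) / ereal ((a n)^2)) \<longlongrightarrow> -\<infinity>) sequentially"
  unfolding tendsto_MInfty
proof
  fix r :: real
  have e1: "eventually (\<lambda>n. a n \<ge> 1) sequentially" using alim by (simp add: filterlim_at_top)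
  have e2: "eventually (\<lambda>n. real n / ((\<kappa> n)^4 * (a n)^2) \<ge> (ln 3 - r + 1) / c) sequentially"
    using lim by (simp add: filterlim_at_top)
  show "eventually (\<lambda>n. ext_ln (p n) / ereal ((a n)^2) < ereal r) sequentially"
    using e1 e2 ev
  proof eventually_elim
    case (elim n)
    have a2: "(a n)^2 > 0" using apos[of n] by simp
    have a21: "(a n)^2 \<ge> 1" using elim(1) by (simp add: one_le_power)
    show ?case
    proof (cases "p n \<le> 0")
      case True
      then show ?thesis using a2 by (simp add: ext_ln_def)
    next
      case False
      then have pp: "p n > 0" by simp
      have "ln (p n) \<le> ln (3 * exp (- (c * (real n / (\<kappa> n)^4))))"
        using pp elim(3) by simp
      also have "\<dots> = ln 3 - c * (real n / (\<kappa> n)^4)" by (simp add: ln_mult)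
      finally have l1: "ln (p n) \<le> ln 3 - c * (real n / (\<kappa> n)^4)" .
      have "ln (p n) / (a n)^2 \<le> (ln 3 - c * (real n / (\<kappa> n)^4)) / (a n)^2"
        using l1 a2 by (simp add: divide_right_mono)
      also have "\<dots> = ln 3 / (a n)^2 - c * (real n / ((\<kappa> n)^4 * (a n)^2))"
        by (simp add: diff_divide_distrib)
      finally have f0: "ln (p n) / (a n)^2 \<le> ln 3 / (a n)^2 - c * (real n / ((\<kappa> n)^4 * (a n)^2))" .
      have "ln 3 / (a n)^2 \<le> ln 3"
        using a21 by (simp add: divide_le_eq ln_ge_zero)
      then have f1: "ln (p n) / (a n)^2 \<le> ln 3 - c * (real n / ((\<kappa> n)^4 * (a n)^2))" using f0 by linarith
      have h: "c * ((ln 3 - r + 1) / c) \<le> c * (real n / ((\<kappa> n)^4 * (a n)^2))"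
        by (rule mult_left_mono[OF elim(2)]) (use cpos in simp)
      have eq: "c * ((ln 3 - r + 1) / c) = ln 3 - r + 1" using cpos by simp
      have "ln (p n) / (a n)^2 < r" using f1 h eq by linarith
      then show ?thesis using pp a2 by (simp add: ext_ln_def)
    qed
  qed
qed



lemma (in prob_space) chern_prob:
  fixes V :: "nat \<Rightarrow> 'a \<Rightarrow> real" and t0 :: real
  assumes indep: "indep_vars (\<lambda>_. borel) V {1..}"
    and ident: "\<And>k. k \<ge> 1 \<Longrightarrow> distr M borel (V k) = distr M borel (V 1)"
    and ie: "integrable M (\<lambda>\<omega>. exp (t0 * (V 1 \<omega>)\<^sup>2))" and t0: "t0 > 0"
  shows "\<exists>K>0. \<forall>n. prob {\<omega>\<in>space M. K * real n < (\<Sum>j\<in>{1..n}. (V j \<omega>)\<^sup>2)} \<le> exp (- real n)"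
proof -
  have Vm: "\<And>k. k \<ge> 1 \<Longrightarrow> V k \<in> borel_measurable M"
    using indep unfolding indep_vars_def by auto
  define K1 where "K1 = expectation (\<lambda>\<omega>. exp (t0 * (V 1 \<omega>)\<^sup>2))"
  have "expectation (\<lambda>_. 1::real) \<le> K1"
    unfolding K1_def using t0 by (intro integral_mono ie) auto
  then have K1: "1 \<le> K1" by (simp add: prob_space)
  define K where "K = (ln K1 + 1) / t0"
  have "0 \<le> ln K1" using K1 by simp
  then have Kpos: "K > 0" using t0 unfolding K_def by (intro divide_pos_pos) linarith+
  show ?thesis
  proof (intro exI[of _ K] conjI allI Kpos)
    fix n
    define R where "R = (\<lambda>\<omega>. \<Sum>j\<in>{1..n}. (V j \<omega>)\<^sup>2)"
    have Rm[measurable]: "R \<in> borel_measurable M"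
      unfolding R_def by (intro borel_measurable_sum borel_measurable_power) (auto intro: Vm)
    have gm: "(\<lambda>\<omega>. t0 * R \<omega>) \<in> borel_measurable M" by measurable
    have sub: "{\<omega>\<in>space M. K * real n < R \<omega>} \<subseteq> {\<omega>\<in>space M. t0 * (K * real n) \<le> t0 * R \<omega>}"
      using t0 by auto
    have "emeasure M {\<omega>\<in>space M. t0 * (K * real n) \<le> t0 * R \<omega>}
        \<le> ennreal (exp (- (t0 * (K * real n)))) * (\<integral>\<^sup>+ \<omega>. ennreal (exp (t0 * R \<omega>)) \<partial>M)"
      by (rule markov_exp[OF gm])
    also have "\<dots> \<le> ennreal (exp (- (t0 * (K * real n)))) * ennreal K1 ^ n"
      by (rule mult_left_mono) (use chernoff[OF indep ident ie, of n] in \<open>simp_all add: R_def K1_def\<close>)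
    also have "\<dots> = ennreal (exp (- (t0 * (K * real n))) * K1 ^ n)"
      using K1 by (simp add: ennreal_power ennreal_mult)
    also have "exp (- (t0 * (K * real n))) * K1 ^ n = exp (- real n)"
    proof -
      have "K1 ^ n = exp (real n * ln K1)" using K1 by (simp add: exp_of_nat_mult)
      moreover have "t0 * (K * real n) = real n * (ln K1 + 1)" using t0 by (simp add: K_def)
      ultimately show ?thesis by (simp add: exp_add[symmetric] algebra_simps)
    qed
    finally have e: "emeasure M {\<omega>\<in>space M. t0 * (K * real n) \<le> t0 * R \<omega>} \<le> ennreal (exp (- real n))" .
    have "prob {\<omega>\<in>space M. K * real n < R \<omega>} \<le> prob {\<omega>\<in>space M. t0 * (K * real n) \<le> t0 * R \<omega>}"
      by (rule finite_measure_mono[OF sub]) measurable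
    also have "\<dots> \<le> exp (- real n)" by (rule prob_le_of_emeasure[OF e]) simp
    finally show "prob {\<omega>\<in>space M. K * real n < (\<Sum>j\<in>{1..n}. (V j \<omega>)\<^sup>2)} \<le> exp (- real n)"
      unfolding R_def .
  qed
qed

lemma (in prob_space) final_mart:
  fixes V :: "nat \<Rightarrow> 'a \<Rightarrow> real" and Y :: "nat \<Rightarrow> nat \<Rightarrow> 'a \<Rightarrow> real"
    and w :: "nat \<Rightarrow> nat \<Rightarrow> nat \<Rightarrow> real" and a \<kappa> :: "nat \<Rightarrow> real" and C K g \<delta> :: real
  assumes indep: "indep_vars (\<lambda>_. borel) V {1..}"
    and ident: "\<And>k. k \<ge> 1 \<Longrightarrow> distr M borel (V k) = distr M borel (V 1)"
    and subg: "\<And>s. integrable M (\<lambda>\<omega>. exp (s * V 1 \<omega>)) \<and> expectation (\<lambda>\<omega>. exp (s * V 1 \<omega>)) \<le> exp (C * s\<^sup>2)"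
    and Cpos: "C > 0" and Kpos: "K > 0"
    and chern: "\<And>n. prob {\<omega>\<in>space M. K * real n < (\<Sum>j\<in>{1..n}. (V j \<omega>)\<^sup>2)} \<le> exp (- real n)"
    and Ydef: "\<And>n k \<omega>. Y n k \<omega> = (\<Sum>j\<in>{1..<k}. w n k j * V j \<omega>)"
    and gpos: "g > 0" and \<delta>pos: "\<delta> > 0"
    and Bnd: "eventually (\<lambda>n. \<kappa> n \<ge> 1 \<and> (\<forall>\<omega>. (\<Sum>k\<in>{1..n}. (Y n k \<omega>)\<^sup>2) \<le> ((\<kappa> n)^2 / g^2)\<^sup>2 * (\<Sum>j\<in>{1..n}. (V j \<omega>)\<^sup>2))) sequentially"
    and apos: "\<And>n. a n > 0" and alim: "filterlim a at_top sequentially"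
    and lim: "filterlim (\<lambda>n. real n / ((\<kappa> n)^4 * (a n)^2)) at_top sequentially"
  shows "((\<lambda>n. ext_ln (prob {\<omega>\<in>space M. \<bar>\<Sum>k\<in>{1..n}. Y n k \<omega> * V k \<omega>\<bar> / real n > \<delta>}) / ereal ((a n)^2)) \<longlongrightarrow> -\<infinity>) sequentially"
proof -
  define c0 where "c0 = \<delta>\<^sup>2 * g^4 / (4 * C * K)"
  have c0: "c0 > 0" using \<delta>pos gpos Cpos Kpos by (simp add: c0_def)
  define c where "c = min c0 1"
  have c: "c > 0" "c \<le> c0" "c \<le> 1" using c0 by (auto simp: c_def)
  have ev: "eventually (\<lambda>n. prob {\<omega>\<in>space M. \<bar>\<Sum>k\<in>{1..n}. Y n k \<omega> * V k \<omega>\<bar> / real n > \<delta>}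
      \<le> 3 * exp (- (c * (real n / (\<kappa> n)^4)))) sequentially"
    using Bnd eventually_gt_at_top[of 0]
  proof eventually_elim
    case (elim n)
    have k1: "\<kappa> n \<ge> 1" and bn: "\<And>\<omega>. (\<Sum>k\<in>{1..n}. (Y n k \<omega>)\<^sup>2) \<le> ((\<kappa> n)^2 / g^2)\<^sup>2 * (\<Sum>j\<in>{1..n}. (V j \<omega>)\<^sup>2)"
      using elim(1) by auto
    have k4: "(\<kappa> n)^4 \<ge> 1" using k1 by (simp add: one_le_power)
    have Bpos: "((\<kappa> n)^2 / g^2)\<^sup>2 > 0" using k1 gpos by simp
    have t: "prob {\<omega>\<in>space M. \<delta> < \<bar>\<Sum>k\<in>{1..n}. Y n k \<omega> * V k \<omega>\<bar> / real n}
      \<le> 2 * exp (- (real n * \<delta>\<^sup>2 / (4*C*((\<kappa> n)^2 / g^2)\<^sup>2*K))) + prob {\<omega>\<in>space M. K * real n < (\<Sum>j\<in>{1..n}. (V j \<omega>)\<^sup>2)}"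
      by (rule tail[OF indep ident subg Cpos Ydef bn Bpos Kpos \<delta>pos elim(2)])
    have eq: "real n * \<delta>\<^sup>2 / (4*C*((\<kappa> n)^2 / g^2)\<^sup>2*K) = c0 * (real n / (\<kappa> n)^4)"
      using k1 gpos Cpos Kpos unfolding c0_def by (simp add: field_simps power2_eq_square power4_eq_xxxx)
    have nn: "0 \<le> real n / (\<kappa> n)^4" using k1 by simp
    have e1: "exp (- (c0 * (real n / (\<kappa> n)^4))) \<le> exp (- (c * (real n / (\<kappa> n)^4)))"
      using mult_right_mono[OF c(2) nn] by simp
    have "real n / (\<kappa> n)^4 \<le> real n" using k4 by (simp add: divide_le_eq mult_le_cancel_left1)
    then have "c * (real n / (\<kappa> n)^4) \<le> real n"
      using mult_mono[OF c(3) \<open>real n / (\<kappa> n)^4 \<le> real n\<close>] c nn by simp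
    then have e2: "exp (- real n) \<le> exp (- (c * (real n / (\<kappa> n)^4)))" by simp
    have t': "prob {\<omega>\<in>space M. \<delta> < \<bar>\<Sum>k\<in>{1..n}. Y n k \<omega> * V k \<omega>\<bar> / real n}
      \<le> 2 * exp (- (c0 * (real n / (\<kappa> n)^4))) + prob {\<omega>\<in>space M. K * real n < (\<Sum>j\<in>{1..n}. (V j \<omega>)\<^sup>2)}"
      using t unfolding eq .
    show ?case using t' chern[of n] e1 e2 by linarith
  qed
  show ?thesis by (rule limit_from_bound[OF apos alim lim c(1) ev])
qed



theorem lemma3p2:
  fixes M :: "'a measure" and V :: "nat \<Rightarrow> 'a \<Rightarrow> real"
    and \<sigma> t0 \<gamma>1 \<gamma>2 \<delta> :: real and \<kappa> a \<theta> \<rho> :: "nat \<Rightarrow> real"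
  assumes P: "prob_space M"
    and meas: "\<And>k. k \<ge> 1 \<Longrightarrow> V k \<in> borel_measurable M"
    and indep: "prob_space.indep_vars M (\<lambda>_. borel) V {1..}"
    and ident: "\<And>k. k \<ge> 1 \<Longrightarrow> distr M borel (V k) = distr M borel (V 1)"
    and int1: "integrable M (V 1)"
    and mean0: "prob_space.expectation M (V 1) = 0"
    and int2: "integrable M (\<lambda>\<omega>. (V 1 \<omega>)\<^sup>2)"
    and var: "prob_space.expectation M (\<lambda>\<omega>. (V 1 \<omega>)\<^sup>2) = \<sigma>\<^sup>2"
    and \<sigma>pos: "\<sigma> > 0"
    and t0: "t0 > 0" and expmom: "integrable M (\<lambda>\<omega>. exp (t0 * (V 1 \<omega>)\<^sup>2))"
    and \<kappa>pos: "\<And>n. \<kappa> n > 0" and \<kappa>lim: "filterlim \<kappa> at_top sequentially"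
    and \<gamma>1: "\<gamma>1 < 0" and \<gamma>2: "\<gamma>2 < 0"
    and \<theta>def: "\<And>n. \<theta> n = 1 + \<gamma>1 / \<kappa> n"
    and cases:
      "((\<forall>n. \<rho> n = 1 + \<gamma>2 / \<kappa> n)
         \<and> incseq a \<and> (\<forall>n. a n > 0) \<and> filterlim a at_top sequentially
         \<and> filterlim (\<lambda>n. real n / ((a n)^6 * (\<kappa> n)^2)) at_top sequentially
         \<and> filterlim (\<lambda>n. real n / ((a n)^2 * (\<kappa> n)^5)) at_top sequentially
         \<and> filterlim (\<lambda>n. real n * (a n)^2 / ((\<kappa> n)^5 * (ln (real n))^2)) at_top sequentially
         \<and> ((\<lambda>n. ext_ln (real n * prob_space.prob M {\<omega>\<in>space M. \<bar>V 1 \<omega>\<bar>^4 > a n * sqrt (real n)})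
                 / ereal ((a n)^2)) \<longlonglongrightarrow> -\<infinity>))
       \<or>
       ((\<forall>n. \<rho> n = -1 - \<gamma>2 / \<kappa> n)
         \<and> incseq a \<and> (\<forall>n. a n > 0) \<and> filterlim a at_top sequentially
         \<and> filterlim (\<lambda>n. real n / ((a n)^6 * (\<kappa> n)^6)) at_top sequentially
         \<and> filterlim (\<lambda>n. real n / ((a n)^2 * (\<kappa> n)^11)) at_top sequentially
         \<and> filterlim (\<lambda>n. real n * (a n)^2 / ((\<kappa> n)^7 * (ln (real n))^2)) at_top sequentially
         \<and> ((\<lambda>n. ext_ln (real n * prob_space.prob M {\<omega>\<in>space M. \<bar>V 1 \<omega>\<bar>^4 > a n * sqrt (real n)})
                 / ereal ((a n)^2)) \<longlonglongrightarrow> -\<infinity>))"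
    and \<delta>: "\<delta> > 0"
  shows "((\<lambda>n. ext_ln (prob_space.prob M {\<omega>\<in>space M. \<bar>M_mart (\<theta> n) (\<rho> n) V n \<omega>\<bar> / real n > \<delta>})
             / ereal ((a n)^2)) \<longlonglongrightarrow> -\<infinity>)
       \<and> ((\<lambda>n. ext_ln (prob_space.prob M {\<omega>\<in>space M. \<bar>N_mart (\<theta> n) (\<rho> n) V n \<omega>\<bar> / real n > \<delta>})
             / ereal ((a n)^2)) \<longlonglongrightarrow> -\<infinity>)
       \<and> ((\<lambda>n. ext_ln (prob_space.prob M {\<omega>\<in>space M. \<bar>U_mart (\<rho> n) V n \<omega>\<bar> / real n > \<delta>})
             / ereal ((a n)^2)) \<longlonglongrightarrow> -\<infinity>)"
proof -
  interpret P: prob_space M by (rule P)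
  obtain C where Cpos: "C > 0" and subg0: "\<forall>s. integrable M (\<lambda>\<omega>. exp (s * V 1 \<omega>)) \<and> P.expectation (\<lambda>\<omega>. exp (s * V 1 \<omega>)) \<le> exp (C * s\<^sup>2)"
    using P.subgauss[OF meas[OF order_refl] int1 mean0 t0 expmom] by blast
  have subg: "\<And>s. integrable M (\<lambda>\<omega>. exp (s * V 1 \<omega>)) \<and> P.expectation (\<lambda>\<omega>. exp (s * V 1 \<omega>)) \<le> exp (C * s\<^sup>2)"
    using subg0 by blast
  obtain K where Kpos: "K > 0" and chern0: "\<forall>n. P.prob {\<omega>\<in>space M. K * real n < (\<Sum>j\<in>{1..n}. (V j \<omega>)\<^sup>2)} \<le> exp (- real n)"
    using P.chern_prob[OF indep ident expmom t0] by blast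
  have chern: "\<And>n. P.prob {\<omega>\<in>space M. K * real n < (\<Sum>j\<in>{1..n}. (V j \<omega>)\<^sup>2)} \<le> exp (- real n)"
    using chern0 by blast
  define g where "g = min (-\<gamma>1) (-\<gamma>2)"
  have gpos: "g > 0" using \<gamma>1 \<gamma>2 by (simp add: g_def)
  define G where "G = max 1 (max (-\<gamma>1) (-\<gamma>2))"
  have evk: "eventually (\<lambda>n. \<kappa> n \<ge> G) sequentially" using \<kappa>lim by (simp add: filterlim_at_top)
  have apos: "\<And>n. a n > 0" and alim: "filterlim a at_top sequentially"
    and rabs: "\<And>n. \<bar>\<rho> n\<bar> = \<bar>1 + \<gamma>2 / \<kappa> n\<bar>"
    using cases by (auto simp: abs_minus_commute)
  have lim: "filterlim (\<lambda>n. real n / ((\<kappa> n)^4 * (a n)^2)) at_top sequentially"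
  proof -
    have ev1: "eventually (\<lambda>n. \<kappa> n \<ge> 1) sequentially"
      using evk by eventually_elim (simp add: G_def)
    from cases show ?thesis
    proof (elim disjE conjE)
      assume l: "filterlim (\<lambda>n. real n / ((a n)^2 * (\<kappa> n)^5)) at_top sequentially"
      show ?thesis
      proof (rule filterlim_at_top_mono[OF l])
        show "eventually (\<lambda>n. real n / ((a n)^2 * (\<kappa> n)^5) \<le> real n / ((\<kappa> n)^4 * (a n)^2)) sequentially"
          using ev1
        proof eventually_elim
          case (elim n)
          have "(\<kappa> n)^4 * 1 \<le> (\<kappa> n)^4 * \<kappa> n" using elim by (intro mult_left_mono) auto
          then have "(\<kappa> n)^4 * (a n)^2 \<le> (a n)^2 * (\<kappa> n)^5"
            using apos[of n] by (simp add: power_Suc2 mult_left_mono mult.commute eval_nat_numeral)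
          moreover have "0 < (\<kappa> n)^4 * (a n)^2" using elim apos[of n] by simp
          ultimately show ?case by (intro divide_left_mono) auto
        qed
      qed
    next
      assume l: "filterlim (\<lambda>n. real n / ((a n)^2 * (\<kappa> n)^11)) at_top sequentially"
      show ?thesis
      proof (rule filterlim_at_top_mono[OF l])
        show "eventually (\<lambda>n. real n / ((a n)^2 * (\<kappa> n)^11) \<le> real n / ((\<kappa> n)^4 * (a n)^2)) sequentially"
          using ev1
        proof eventually_elim
          case (elim n)
          have "(\<kappa> n)^4 * 1 \<le> (\<kappa> n)^4 * (\<kappa> n)^7" using elim by (intro mult_left_mono one_le_power) auto
          then have "(\<kappa> n)^4 \<le> (\<kappa> n)^11" by (simp add: power_add[symmetric])
          then have "(\<kappa> n)^4 * (a n)^2 \<le> (a n)^2 * (\<kappa> n)^11"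
            using apos[of n] by (simp add: mult_left_mono mult.commute)
          moreover have "0 < (\<kappa> n)^4 * (a n)^2" using elim apos[of n] by simp
          ultimately show ?case by (intro divide_left_mono) auto
        qed
      qed
    qed
  qed
  define q where "q = (\<lambda>n. 1 - g / \<kappa> n)"
  have qb: "eventually (\<lambda>n. \<kappa> n \<ge> 1 \<and> 0 \<le> q n \<and> q n < 1 \<and> \<bar>\<theta> n\<bar> \<le> q n \<and> \<bar>\<rho> n\<bar> \<le> q n
      \<and> 1 / (1 - q n)\<^sup>2 = (\<kappa> n)^2 / g^2) sequentially"
    using evk
  proof eventually_elim
    case (elim n)
    have k1: "\<kappa> n \<ge> 1" using elim by (simp add: G_def)
    have kp: "\<kappa> n > 0" using k1 by simp
    have g1: "g \<le> -\<gamma>1" "g \<le> -\<gamma>2" by (simp_all add: g_def)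
    have G1: "-\<gamma>1 \<le> \<kappa> n" "-\<gamma>2 \<le> \<kappa> n" using elim by (simp_all add: G_def)
    have "g / \<kappa> n \<le> 1" using g1 G1 kp by (simp add: divide_le_eq)
    then have q0: "0 \<le> q n" by (simp add: q_def)
    have q1: "q n < 1" using gpos kp by (simp add: q_def)
    have t1: "0 \<le> 1 + \<gamma>1 / \<kappa> n" using G1 kp by (simp add: field_simps)
    have t2: "1 + \<gamma>1 / \<kappa> n \<le> q n"
    proof -
      have "\<gamma>1 / \<kappa> n \<le> (-g) / \<kappa> n" using g1(1) kp by (intro divide_right_mono) auto
      then show ?thesis by (simp add: q_def)
    qed
    have r1: "0 \<le> 1 + \<gamma>2 / \<kappa> n" using G1 kp by (simp add: field_simps)
    have r2: "1 + \<gamma>2 / \<kappa> n \<le> q n"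
    proof -
      have "\<gamma>2 / \<kappa> n \<le> (-g) / \<kappa> n" using g1(2) kp by (intro divide_right_mono) auto
      then show ?thesis by (simp add: q_def)
    qed
    have th: "\<bar>\<theta> n\<bar> \<le> q n" using t1 t2 by (simp add: \<theta>def)
    have rh: "\<bar>\<rho> n\<bar> \<le> q n" using r1 r2 by (simp add: rabs)
    have "1 - q n = g / \<kappa> n" by (simp add: q_def)
    then have "1 / (1 - q n)\<^sup>2 = (\<kappa> n)^2 / g^2" using gpos kp by (simp add: power_divide)
    then show ?case using k1 q0 q1 th rh by simp
  qed
  have M: "((\<lambda>n. ext_ln (P.prob {\<omega>\<in>space M. \<bar>\<Sum>k\<in>{1..n}. X_proc (\<theta> n) (\<rho> n) V (k - 1) \<omega> * V k \<omega>\<bar> / real n > \<delta>}) / ereal ((a n)^2)) \<longlongrightarrow> -\<infinity>) sequentially"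
  proof (rule P.final_mart[where Y="\<lambda>n k \<omega>. X_proc (\<theta> n) (\<rho> n) V (k - 1) \<omega>" and w="\<lambda>n k j. cc (\<theta> n) (\<rho> n) (k - 1 - j)",
        OF indep ident subg Cpos Kpos chern X1_w gpos \<delta> _ apos alim lim])
    show "eventually (\<lambda>n. \<kappa> n \<ge> 1 \<and> (\<forall>\<omega>. (\<Sum>k\<in>{1..n}. (X_proc (\<theta> n) (\<rho> n) V (k - 1) \<omega>)\<^sup>2) \<le> ((\<kappa> n)^2 / g^2)\<^sup>2 * (\<Sum>j\<in>{1..n}. (V j \<omega>)\<^sup>2))) sequentially"
      using qb by eventually_elim (use M_sq in metis)
  qed
  have N: "((\<lambda>n. ext_ln (P.prob {\<omega>\<in>space M. \<bar>\<Sum>k\<in>{1..n}. X_proc (\<theta> n) (\<rho> n) V (k - 2) \<omega> * V k \<omega>\<bar> / real n > \<delta>}) / ereal ((a n)^2)) \<longlongrightarrow> -\<infinity>) sequentially"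
  proof (rule P.final_mart[where Y="\<lambda>n k \<omega>. X_proc (\<theta> n) (\<rho> n) V (k - 2) \<omega>" and w="\<lambda>n k j. (if j \<le> k - 2 then cc (\<theta> n) (\<rho> n) (k - 2 - j) else 0)",
        OF indep ident subg Cpos Kpos chern X2_w gpos \<delta> _ apos alim lim])
    show "eventually (\<lambda>n. \<kappa> n \<ge> 1 \<and> (\<forall>\<omega>. (\<Sum>k\<in>{1..n}. (X_proc (\<theta> n) (\<rho> n) V (k - 2) \<omega>)\<^sup>2) \<le> ((\<kappa> n)^2 / g^2)\<^sup>2 * (\<Sum>j\<in>{1..n}. (V j \<omega>)\<^sup>2))) sequentially"
      using qb by eventually_elim (use N_sq in metis)
  qed
  have U: "((\<lambda>n. ext_ln (P.prob {\<omega>\<in>space M. \<bar>\<Sum>k\<in>{1..n}. eps_proc (\<rho> n) V (k - 1) \<omega> * V k \<omega>\<bar> / real n > \<delta>}) / ereal ((a n)^2)) \<longlongrightarrow> -\<infinity>) sequentially"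
  proof (rule P.final_mart[where Y="\<lambda>n k \<omega>. eps_proc (\<rho> n) V (k - 1) \<omega>" and w="\<lambda>n k j. (\<rho> n)^(k - 1 - j)",
        OF indep ident subg Cpos Kpos chern eps1_w gpos \<delta> _ apos alim lim])
    show "eventually (\<lambda>n. \<kappa> n \<ge> 1 \<and> (\<forall>\<omega>. (\<Sum>k\<in>{1..n}. (eps_proc (\<rho> n) V (k - 1) \<omega>)\<^sup>2) \<le> ((\<kappa> n)^2 / g^2)\<^sup>2 * (\<Sum>j\<in>{1..n}. (V j \<omega>)\<^sup>2))) sequentially"
      using qb by eventually_elim (use U_sq in metis)
  qed
  show ?thesis
    using M N U by (simp only: M_mart_def N_alt U_mart_def)
qed


end
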